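(* For every $T<+\infty$ and every $i\in\{1,\dots,l\}$ there exists $C<+\infty$ such that for all $h>0$ and $k\in\mathbb{N}$ with $kh\leq T$, and with $N=\lfloor T/h\rfloor$, $$M(\rho_{i,h}^k)\leq C,\qquad \mathcal{F}_i(\rho_{i,h}^k)\leq C,\qquad \sum_{k=0}^{N-1}W_2^2(\rho_{i,h}^k,\rho_{i,h}^{k+1})\leq Ch.$$
   Context: Setting: integers $n,l\geq1$; $\mathcal{P}_2^{ac}(\mathbb{R}^n)$ probability densities with finite second moment $M(\rho)=\int|x|^2\rho$; $W_2$ quadratic Wasserstein distance. For $i=1,\dots,l$: $m_i\geq1$, $F_i\in\mathcal{H}_{m_i}$ ($\mathcal{H}_1=\{x\log x\}$; for $m>1$ strictly convex superlinear $F$ with $F(0)=F'(0)=0$, $F''(x)\geq Cx^{m-2}$, $xF'(x)-F(x)\leq C(x+x^m)$); $V_i:\mathcal{P}(\mathbb{R}^n)^l\to\mathcal{C}^2(\mathbb{R}^n)$ continuous with $V_i\geq0$, $\|\nabla V_i[\boldsymbol{\rho}]\|_\infty+\|D^2V_i[\boldsymbol{\rho}]\|_\infty\leq C$, $\|\nabla V_i[\boldsymbol{\nu}]-\nabla V_i[\boldsymbol{\sigma}]\|_\infty\leq C\sum_jW_2(\nu_j,\sigma_j)$. $\mathcal{F}_i(\rho)=\int F_i(\rho)$ (if $\rho\ll\mathcal{L}^n$, else $+\infty$), $\mathcal{V}_i(\rho\mid\boldsymbol{\mu})=\int V_i[\boldsymbol{\mu}]\rho$. Initial data $\rho_{i,0}\in\mathcal{P}_2^{ac}(\mathbb{R}^n)$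 with $\mathcal{F}_i(\rho_{i,0})+\mathcal{V}_i(\rho_{i,0}\mid\boldsymbol{\rho}_0)<\infty$. Scheme: $\rho_{i,h}^0=\rho_{i,0}$; for $k\geq1$, $\rho_{i,h}^k$ is the unique minimizer over $\mathcal{P}_2^{ac}(\mathbb{R}^n)$ of $W_2^2(\rho,\rho_{i,h}^{k-1})+2h(\mathcal{F}_i(\rho)+\mathcal{V}_i(\rho\mid\boldsymbol{\rho}_h^{k-1}))$, with $\boldsymbol{\rho}_h^{k-1}=(\rho_{1,h}^{k-1},\dots,\rho_{l,h}^{k-1})$. *)

theory Defs
  imports "HOL-Probability.Probability"
begin

definition P2ac :: "('a::euclidean_space \<Rightarrow> real) set" where
  "P2ac = {\<rho>. \<rho> \<in> borel_measurable borel \<and> (\<forall>x. 0 \<le> \<rho> x)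
              \<and> (\<integral>\<^sup>+ x. ennreal (\<rho> x) \<partial>lborel) = 1
              \<and> (\<integral>\<^sup>+ x. ennreal ((norm x)\<^sup>2 * \<rho> x) \<partial>lborel) < \<infinity>}"

definition dmeas :: "('a::euclidean_space \<Rightarrow> real) \<Rightarrow> 'a measure" where
  "dmeas \<rho> = density lborel (\<lambda>x. ennreal (\<rho> x))"

definition moment2 :: "('a::euclidean_space \<Rightarrow> real) \<Rightarrow> ennreal" where
  "moment2 \<rho> = (\<integral>\<^sup>+ x. ennreal ((norm x)\<^sup>2 * \<rho> x) \<partial>lborel)"

definition couplings :: "'a::euclidean_space measure \<Rightarrow> 'a measure \<Rightarrow> ('a \<times> 'a) measure set" where
  "couplings \<mu> \<nu> = {\<pi>. sets \<pi> = sets (borel \<Otimes>\<^sub>M borel)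
                       \<and> distr \<pi> borel fst = \<mu> \<and> distr \<pi> borel snd = \<nu>}"

definition W2sq :: "'a::euclidean_space measure \<Rightarrow> 'a measure \<Rightarrow> ennreal" where
  "W2sq \<mu> \<nu> = (INF \<pi>\<in>couplings \<mu> \<nu>. \<integral>\<^sup>+ p. ennreal ((dist (fst p) (snd p))\<^sup>2) \<partial>\<pi>)"

(* quadratic Wasserstein distance (for measures with finite second moment) *)
definition W2 :: "'a::euclidean_space measure \<Rightarrow> 'a measure \<Rightarrow> real" where
  "W2 \<mu> \<nu> = sqrt (enn2real (W2sq \<mu> \<nu>))"

definition strictly_convex_on :: "real set \<Rightarrow> (real \<Rightarrow> real) \<Rightarrow> bool" where
  "strictly_convex_on S f \<longleftrightarrow> (\<forall>x\<in>S. \<forall>y\<in>S. \<forall>t::real. x \<noteq> y \<and> 0 < t \<and> t < 1 \<longrightarrow>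
      f ((1 - t) * x + t * y) < (1 - t) * f x + t * f y)"

definition Hclass :: "real \<Rightarrow> (real \<Rightarrow> real) \<Rightarrow> bool" where
  "Hclass m F \<longleftrightarrow>
     (if m = 1 then (\<forall>x\<ge>0. F x = x * ln x)
      else m > 1 \<and> strictly_convex_on {0..} F
        \<and> filterlim (\<lambda>x. F x / x) at_top at_top
        \<and> F 0 = 0 \<and> (F has_real_derivative 0) (at 0 within {0..})
        \<and> (\<exists>F' F'' C. C > 0
              \<and> (\<forall>x>0. (F has_real_derivative F' x) (at x))
              \<and> (\<forall>x>0. (F' has_real_derivative F'' x) (at x))
              \<and> (\<forall>x>0. F'' x \<ge> C * x powr (m - 2))
              \<and> (\<forall>x>0. x * F' x - F x \<le> C * (x + x powr m))))"

definition Ffun :: "(real \<Rightarrow> real) \<Rightarrow> ('a::euclidean_space \<Rightarrow> real) \<Rightarrow> ereal" where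
  "Ffun F \<rho> = (if integrable lborel (\<lambda>x. F (\<rho> x))
                then ereal (\<integral> x. F (\<rho> x) \<partial>lborel) else \<infinity>)"

definition Vfun :: "('a::euclidean_space \<Rightarrow> real) \<Rightarrow> ('a \<Rightarrow> real) \<Rightarrow> ennreal" where
  "Vfun Vmu \<rho> = (\<integral>\<^sup>+ x. ennreal (Vmu x * \<rho> x) \<partial>lborel)"

(* the JKO functional for component i with previous step rhoprev and frozen tuple mu *)
definition JKO :: "real \<Rightarrow> (real \<Rightarrow> real) \<Rightarrow> ('a::euclidean_space \<Rightarrow> real) \<Rightarrow> ('a \<Rightarrow> real)
                   \<Rightarrow> ('a \<Rightarrow> real) \<Rightarrow> ereal" where
  "JKO h F Vmu rhoprev \<rho> =
     enn2ereal (W2sq (dmeas \<rho>) (dmeas rhoprev)) + 2 * ereal h * (Ffun F \<rho> + enn2ereal (Vfun Vmu \<rho>))"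

end

theory Submission
  imports Defs
begin

lemma P2acD:
  assumes "\<rho> \<in> P2ac"
  shows "\<rho> \<in> borel_measurable borel" "\<And>x. 0 \<le> \<rho> x"
    "(\<integral>\<^sup>+ x. ennreal (\<rho> x) \<partial>lborel) = 1"
    "moment2 \<rho> < \<infinity>"
  using assms unfolding P2ac_def moment2_def by auto
lemma sets_dmeas[simp]: "sets (dmeas \<rho>) = sets borel"
  by (simp add: dmeas_def)

lemma space_dmeas[simp]: "space (dmeas \<rho>) = UNIV"
  by (simp add: dmeas_def)

lemma nn_integral_dmeas:
  assumes "\<rho> \<in> P2ac" "g \<in> borel_measurable borel"
  shows "(\<integral>\<^sup>+ x. g x \<partial>dmeas \<rho>) = (\<integral>\<^sup>+ x. ennreal (\<rho> x) * g x \<partial>lborel)"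
  unfolding dmeas_def using assms P2acD[OF assms(1)]
  by (subst nn_integral_density) auto

lemma couplingD:
  assumes "\<pi> \<in> couplings \<mu> \<nu>"
  shows "sets \<pi> = sets (borel \<Otimes>\<^sub>M borel)" "distr \<pi> borel fst = \<mu>" "distr \<pi> borel snd = \<nu>"
  using assms by (auto simp: couplings_def)

lemma coupling_meas:
  assumes "\<pi> \<in> couplings \<mu> (\<nu>::'a::euclidean_space measure)"
  shows "fst \<in> measurable \<pi> (borel::'a measure)" "snd \<in> measurable \<pi> (borel::'a measure)"
proof -
  have "fst \<in> measurable (borel \<Otimes>\<^sub>M borel) (borel::'a measure)"
       "snd \<in> measurable (borel \<Otimes>\<^sub>M borel) (borel::'a measure)" by simp_all
  then show "fst \<in> measurable \<pi> (borel::'a measure)" "snd \<in> measurable \<pi> (borel::'a measure)"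
    using measurable_cong_sets[OF couplingD(1)[OF assms] refl] by blast+
qed

lemma coupling_fst:
  fixes g :: "'a::euclidean_space \<Rightarrow> ennreal"
  assumes "\<pi> \<in> couplings \<mu> \<nu>" "g \<in> borel_measurable borel"
  shows "(\<integral>\<^sup>+ p. g (fst p) \<partial>\<pi>) = (\<integral>\<^sup>+ x. g x \<partial>\<mu>)"
proof -
  have "g \<in> borel_measurable (distr \<pi> borel fst)"
    using assms(2) measurable_cong_sets[OF sets_distr refl] by blast
  then show ?thesis
    using nn_integral_distr[OF coupling_meas(1)[OF assms(1)]] couplingD(2)[OF assms(1)] by simp
qed

lemma coupling_snd:
  fixes g :: "'a::euclidean_space \<Rightarrow> ennreal"
  assumes "\<pi> \<in> couplings \<mu> \<nu>" "g \<in> borel_measurable borel"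
  shows "(\<integral>\<^sup>+ p. g (snd p) \<partial>\<pi>) = (\<integral>\<^sup>+ x. g x \<partial>\<nu>)"
proof -
  have "g \<in> borel_measurable (distr \<pi> borel snd)"
    using assms(2) measurable_cong_sets[OF sets_distr refl] by blast
  then show ?thesis
    using nn_integral_distr[OF coupling_meas(2)[OF assms(1)]] couplingD(3)[OF assms(1)] by simp
qed

lemma mdist2: "(\<lambda>p::'a::euclidean_space\<times>'a. ennreal ((dist (fst p) (snd p))\<^sup>2)) \<in> borel_measurable (borel \<Otimes>\<^sub>M borel)"
  by measurable

lemma W2sq_self:
  shows "W2sq (dmeas \<rho>) (dmeas (\<rho>::'a::euclidean_space \<Rightarrow> real)) = 0"
proof -
  let ?\<pi> = "distr (dmeas \<rho>) (borel \<Otimes>\<^sub>M borel) (\<lambda>x::'a. (x, x))"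
  have mm: "(\<lambda>x::'a. (x, x)) \<in> measurable (dmeas \<rho>) (borel \<Otimes>\<^sub>M borel)"
    apply (subst measurable_cong_sets[OF sets_dmeas refl]) by measurable
  have mf: "fst \<in> measurable (borel \<Otimes>\<^sub>M borel) (borel::'a measure)"
    "snd \<in> measurable (borel \<Otimes>\<^sub>M borel) (borel::'a measure)" by simp_all
  have d1: "distr ?\<pi> borel fst = dmeas \<rho>"
  proof -
    have "distr ?\<pi> borel fst = distr (dmeas \<rho>) borel (fst \<circ> (\<lambda>x::'a. (x, x)))"
      by (rule distr_distr[OF mf(1) mm])
    also have "\<dots> = distr (dmeas \<rho>) borel (\<lambda>x. x)" by (simp add: comp_def)
    also have "\<dots> = dmeas \<rho>" by (rule distr_id2) simp
    finally show ?thesis .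
  qed
  have d2: "distr ?\<pi> borel snd = dmeas \<rho>"
  proof -
    have "distr ?\<pi> borel snd = distr (dmeas \<rho>) borel (snd \<circ> (\<lambda>x::'a. (x, x)))"
      by (rule distr_distr[OF mf(2) mm])
    also have "\<dots> = distr (dmeas \<rho>) borel (\<lambda>x. x)" by (simp add: comp_def)
    also have "\<dots> = dmeas \<rho>" by (rule distr_id2) simp
    finally show ?thesis .
  qed
  have cp: "?\<pi> \<in> couplings (dmeas \<rho>) (dmeas \<rho>)"
    unfolding couplings_def using d1 d2 by simp
  have c0:  "(\<integral>\<^sup>+ p. ennreal ((dist (fst p) (snd p))\<^sup>2) \<partial>?\<pi>) = 0"
  proof -
    have "(\<integral>\<^sup>+ p. ennreal ((dist (fst p) (snd p))\<^sup>2) \<partial>?\<pi>)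
        = (\<integral>\<^sup>+ x. ennreal ((dist (fst (x,x)) (snd (x,x)))\<^sup>2) \<partial>dmeas \<rho>)"
      by (rule nn_integral_distr[OF mm]) (subst measurable_cong_sets[OF sets_distr refl], rule mdist2)
    then show ?thesis by simp
  qed
  have "W2sq (dmeas \<rho>) (dmeas \<rho>) \<le> (\<integral>\<^sup>+ p. ennreal ((dist (fst p) (snd p))\<^sup>2) \<partial>?\<pi>)"
    unfolding W2sq_def by (rule INF_lower[OF cp])
  then have "W2sq (dmeas \<rho>) (dmeas \<rho>) \<le> 0" using c0 by simp
  then show ?thesis by simp
qed

lemma W2sq_sym_le: "W2sq \<nu> \<mu> \<le> W2sq \<mu> (\<nu>::'a::euclidean_space measure)"
  unfolding W2sq_def
proof (rule INF_greatest)
  fix \<pi> assume pi: "\<pi> \<in> couplings \<mu> \<nu>"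
  let ?sw = "\<lambda>p::'a\<times>'a. (snd p, fst p)"
  let ?s = "distr \<pi> (borel \<Otimes>\<^sub>M borel) ?sw"
  have mm: "?sw \<in> measurable \<pi> (borel \<Otimes>\<^sub>M borel)"
    by (intro measurable_Pair coupling_meas[OF pi])
  have mf: "fst \<in> measurable (borel \<Otimes>\<^sub>M borel) (borel::'a measure)"
    "snd \<in> measurable (borel \<Otimes>\<^sub>M borel) (borel::'a measure)" by simp_all
  have d1: "distr ?s borel fst = \<nu>"
    using distr_distr[OF mf(1) mm] couplingD(3)[OF pi] by (simp add: comp_def)
  have d2: "distr ?s borel snd = \<mu>"
    using distr_distr[OF mf(2) mm] couplingD(2)[OF pi] by (simp add: comp_def)
  have cp: "?s \<in> couplings \<nu> \<mu>"
    unfolding couplings_def using d1 d2 by simp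
  have c0:  "(\<integral>\<^sup>+ p. ennreal ((dist (fst p) (snd p))\<^sup>2) \<partial>?s)
     = (\<integral>\<^sup>+ p. ennreal ((dist (fst p) (snd p))\<^sup>2) \<partial>\<pi>)"
  proof -
    have "(\<integral>\<^sup>+ p. ennreal ((dist (fst p) (snd p))\<^sup>2) \<partial>?s)
       = (\<integral>\<^sup>+ p. ennreal ((dist (fst (?sw p)) (snd (?sw p)))\<^sup>2) \<partial>\<pi>)"
      by (rule nn_integral_distr[OF mm]) (subst measurable_cong_sets[OF sets_distr refl], rule mdist2)
    then show ?thesis by (simp add: dist_commute)
  qed
  show "(INF \<pi>\<in>couplings \<nu> \<mu>. \<integral>\<^sup>+ p. ennreal ((dist (fst p) (snd p))\<^sup>2) \<partial>\<pi>)
     \<le> (\<integral>\<^sup>+ p. ennreal ((dist (fst p) (snd p))\<^sup>2) \<partial>\<pi>)"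
    using INF_lower[OF cp, of "\<lambda>\<pi>. \<integral>\<^sup>+ p. ennreal ((dist (fst p) (snd p))\<^sup>2) \<partial>\<pi>"] c0 by simp
qed

lemma W2sq_sym: "W2sq \<nu> \<mu> = W2sq \<mu> (\<nu>::'a::euclidean_space measure)"
  by (simp add: W2sq_sym_le antisym)

lemma INF_bound_ennreal:
  fixes x a :: ennreal and f :: "'b \<Rightarrow> ennreal"
  assumes b: "b > 0" and H: "\<And>\<pi>. \<pi> \<in> A \<Longrightarrow> x \<le> a + ennreal b * f \<pi>"
  shows "x \<le> a + ennreal b * (INF \<pi>\<in>A. f \<pi>)"
proof (cases "(INF \<pi>\<in>A. f \<pi>) = \<top>")
  case True
  then show ?thesis using b by (simp add: ennreal_mult_top)
next
  case False
  show ?thesis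
  proof (rule ennreal_le_epsilon)
    fix e :: real assume e: "0 < e"
    have "e / b > 0" using e b by simp
    then obtain \<pi> where pi: "\<pi> \<in> A" "f \<pi> < (INF \<pi>\<in>A. f \<pi>) + ennreal (e / b)"
      using INF_approx_ennreal[of "e/b" "(INF \<pi>\<in>A. f \<pi>)" f A] False by auto
    have "x \<le> a + ennreal b * f \<pi>" using H pi by auto
    also have "\<dots> \<le> a + ennreal b * ((INF \<pi>\<in>A. f \<pi>) + ennreal (e / b))"
      using pi by (intro add_left_mono mult_left_mono) auto
    also have "\<dots> = a + ennreal b * (INF \<pi>\<in>A. f \<pi>) + ennreal b * ennreal (e / b)"
      by (simp add: distrib_left add.assoc)
    also have "ennreal b * ennreal (e / b) = ennreal e"
      using b e by (simp add: ennreal_mult[symmetric])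
    finally show "x \<le> a + ennreal b * (INF \<pi>\<in>A. f \<pi>) + ennreal e" .
  qed
qed



lemma nn_integral_dmeas_real:
  fixes g :: "'a::euclidean_space \<Rightarrow> real"
  assumes "\<rho> \<in> P2ac" "g \<in> borel_measurable borel" "\<And>x. g x \<ge> 0"
  shows "(\<integral>\<^sup>+ x. ennreal (g x) \<partial>dmeas \<rho>) = (\<integral>\<^sup>+ x. ennreal (g x * \<rho> x) \<partial>lborel)"
  using assms P2acD[OF assms(1)]
  by (subst nn_integral_dmeas) (auto simp: ennreal_mult'' mult.commute intro!: nn_integral_cong)

lemma dmeas_total:
  assumes "\<rho> \<in> P2ac"
  shows "(\<integral>\<^sup>+ x. ennreal c \<partial>dmeas \<rho>) = ennreal c"
proof -
  have "(\<integral>\<^sup>+ x. ennreal c \<partial>dmeas \<rho>) = (\<integral>\<^sup>+ x. ennreal c * ennreal (\<rho> x) \<partial>lborel)"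
    using assms by (subst nn_integral_dmeas) (auto simp: mult.commute)
  also have "\<dots> = ennreal c * (\<integral>\<^sup>+ x. ennreal (\<rho> x) \<partial>lborel)"
    using P2acD[OF assms] by (subst nn_integral_cmult) auto
  finally show ?thesis using P2acD[OF assms] by simp
qed

lemma coupling_bound:
  fixes g G :: "'a::euclidean_space \<Rightarrow> real"
  assumes r: "\<rho> \<in> P2ac" and s: "\<sigma> \<in> P2ac"
    and mg: "g \<in> borel_measurable borel" and mG: "G \<in> borel_measurable borel"
    and g0: "\<And>x. g x \<ge> 0" and G0: "\<And>x. G x \<ge> 0" and b: "b > 0" and c: "c \<ge> 0"
    and H: "\<And>x y. G y \<le> g x + b * (dist x y)\<^sup>2 + c"
  shows "(\<integral>\<^sup>+ x. ennreal (G x * \<sigma> x) \<partial>lborel)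
     \<le> ((\<integral>\<^sup>+ x. ennreal (g x * \<rho> x) \<partial>lborel) + ennreal c) + ennreal b * W2sq (dmeas \<rho>) (dmeas \<sigma>)"
  unfolding W2sq_def
proof (rule INF_bound_ennreal[OF b])
  fix \<pi> assume pi: "\<pi> \<in> couplings (dmeas \<rho>) (dmeas \<sigma>)"
  have mf: "fst \<in> measurable \<pi> borel" "snd \<in> measurable \<pi> borel" using coupling_meas[OF pi] by auto
  have "(\<integral>\<^sup>+ x. ennreal (G x * \<sigma> x) \<partial>lborel) = (\<integral>\<^sup>+ x. ennreal (G x) \<partial>dmeas \<sigma>)"
    using nn_integral_dmeas_real[OF s mG G0] by simp
  also have "\<dots> = (\<integral>\<^sup>+ p. ennreal (G (snd p)) \<partial>\<pi>)"
    using coupling_snd[OF pi, of "\<lambda>x. ennreal (G x)"] mG by simp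
  also have "\<dots> \<le> (\<integral>\<^sup>+ p. ennreal (g (fst p)) + ennreal b * ennreal ((dist (fst p) (snd p))\<^sup>2) + ennreal c \<partial>\<pi>)"
  proof (rule nn_integral_mono)
    fix p :: "'a \<times> 'a"
    have "ennreal (G (snd p)) \<le> ennreal (g (fst p) + b * (dist (fst p) (snd p))\<^sup>2 + c)"
      using H by (intro ennreal_leI) auto
    also have "\<dots> = ennreal (g (fst p)) + ennreal b * ennreal ((dist (fst p) (snd p))\<^sup>2) + ennreal c"
      using g0 b c by (simp add: ennreal_plus[symmetric] ennreal_mult[symmetric] del: ennreal_plus)
    finally show "ennreal (G (snd p)) \<le> ennreal (g (fst p)) + ennreal b * ennreal ((dist (fst p) (snd p))\<^sup>2) + ennreal c" .
  qed
  also have "\<dots> = (\<integral>\<^sup>+ p. ennreal (g (fst p)) \<partial>\<pi>) + ennreal b * (\<integral>\<^sup>+ p. ennreal ((dist (fst p) (snd p))\<^sup>2) \<partial>\<pi>)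
       + (\<integral>\<^sup>+ p. ennreal c \<partial>\<pi>)"
    using mf mg by (simp add: nn_integral_add nn_integral_cmult)
  also have "(\<integral>\<^sup>+ p. ennreal (g (fst p)) \<partial>\<pi>) = (\<integral>\<^sup>+ x. ennreal (g x * \<rho> x) \<partial>lborel)"
    using coupling_fst[OF pi, of "\<lambda>x. ennreal (g x)"] mg nn_integral_dmeas_real[OF r mg g0] by simp
  also have "(\<integral>\<^sup>+ p. ennreal c \<partial>\<pi>) = ennreal c"
    using coupling_fst[OF pi, of "\<lambda>x. ennreal c"] dmeas_total[OF r] by simp
  finally show "(\<integral>\<^sup>+ x. ennreal (G x * \<sigma> x) \<partial>lborel)
     \<le> ((\<integral>\<^sup>+ x. ennreal (g x * \<rho> x) \<partial>lborel) + ennreal c) + ennreal b * (\<integral>\<^sup>+ p. ennreal ((dist (fst p) (snd p))\<^sup>2) \<partial>\<pi>)"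
    by (simp add: ac_simps)
qed



lemma gauss1_finite:
  assumes d: "(d::real) > 0"
  shows "(\<integral>\<^sup>+ t. ennreal (exp (- d * t\<^sup>2)) \<partial>lborel) < \<infinity>"
proof -
  define s where "s = sqrt (1 / (2 * d))"
  have s0: "s > 0" using d by (simp add: s_def)
  have s2: "2 * s\<^sup>2 = 1 / d" using d by (simp add: s_def)
  define K where "K = sqrt (2 * pi * s\<^sup>2)"
  have K0: "K > 0" using s0 by (simp add: K_def)
  have eq: "\<And>t. exp (- d * t\<^sup>2) = K * normal_density 0 s t"
  proof -
    fix t :: real
    have "-(t - 0)\<^sup>2 / (2 * s\<^sup>2) = -(t\<^sup>2) / (1 / d)" by (simp only: s2) simp
    also have "\<dots> = - d * t\<^sup>2" using d by simp
    finally have "-(t - 0)\<^sup>2 / (2 * s\<^sup>2) = - d * t\<^sup>2" .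
    then show "exp (- d * t\<^sup>2) = K * normal_density 0 s t"
      using K0 s0 unfolding normal_density_def K_def by simp
  qed
  have "integrable lborel (\<lambda>t. K * normal_density 0 s t)"
    using s0 by (auto intro!: integrable_mult_right integrable_normal_density)
  moreover have e2: "(\<lambda>t. exp (- d * t\<^sup>2)) = (\<lambda>t. K * normal_density 0 s t)" by (rule ext) (rule eq)
  ultimately have "integrable lborel (\<lambda>t. exp (- d * t\<^sup>2))" by (simp only: e2)
  then show ?thesis using integrableD(2) by (auto simp: less_top)
qed

lemma gauss_finite:
  assumes d: "(d::real) > 0"
  shows "(\<integral>\<^sup>+ x. ennreal (exp (- d * (norm (x::'a::euclidean_space))\<^sup>2)) \<partial>lborel) < \<infinity>"
proof -
  have eq: "\<And>x::'a. ennreal (exp (- d * (norm x)\<^sup>2)) = (\<Prod>b\<in>Basis. ennreal (exp (- d * (x \<bullet> b)\<^sup>2)))"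
  proof -
    fix x :: 'a
    have "(norm x)\<^sup>2 = (\<Sum>b\<in>Basis. (x \<bullet> b)\<^sup>2)"
      unfolding power2_norm_eq_inner by (subst euclidean_inner) (simp add: power2_eq_square)
    then have "exp (- d * (norm x)\<^sup>2) = (\<Prod>b\<in>Basis. exp (- d * (x \<bullet> b)\<^sup>2))"
      by (simp add: sum_distrib_left exp_sum[symmetric] sum_negf)
    then show "ennreal (exp (- d * (norm x)\<^sup>2)) = (\<Prod>b\<in>Basis. ennreal (exp (- d * (x \<bullet> b)\<^sup>2)))"
      by (simp add: prod_ennreal)
  qed
  have "(\<integral>\<^sup>+ x. ennreal (exp (- d * (norm (x::'a))\<^sup>2)) \<partial>lborel)
      = (\<Prod>b\<in>(Basis::'a set). (\<integral>\<^sup>+ t. ennreal (exp (- d * t\<^sup>2)) \<partial>lborel))"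
    unfolding eq by (rule nn_integral_lborel_prod) auto
  also have "\<dots> < \<infinity>"
    using gauss1_finite[OF d] by (simp add: power_less_top_ennreal)
  finally show ?thesis .
qed



lemma xlnx_lower:
  fixes t a :: real assumes t: "t \<ge> 0"
  shows "t * ln t \<ge> - a * t - exp (- a)"
proof (cases "t = 0")
  case True then show ?thesis by simp
next
  case False
  then have t0: "t > 0" using t by simp
  have "ln (exp (-a-1) / t) \<le> exp (-a-1) / t - 1"
    using t0 by (intro ln_le_minus_one) simp
  moreover have "ln (exp (-a-1) / t) = -a - 1 - ln t"
    using t0 by (simp add: ln_div)
  ultimately have "-a - 1 - ln t \<le> exp (-a-1) / t - 1" by simp
  then have "t * (-a - 1 - ln t) \<le> t * (exp (-a-1) / t - 1)"
    using t0 by (intro mult_left_mono) auto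
  then have "- a * t - t - t * ln t \<le> exp (-a-1) - t"
    using t0 by (simp add: algebra_simps)
  moreover have "exp (-a-1) \<le> exp (-a)" by simp
  ultimately show ?thesis by linarith
qed

lemma Hclass_nonneg:
  assumes H: "Hclass m F" and m: "m \<noteq> 1" and x: "x \<ge> 0"
  shows "F x \<ge> 0"
proof (rule ccontr)
  assume neg: "\<not> F x \<ge> 0"
  have sc: "strictly_convex_on {0..} F" and F0: "F 0 = 0"
    and dF: "(F has_real_derivative 0) (at 0 within {0..})"
    using H m unfolding Hclass_def by auto
  have xp: "x > 0" using neg x F0 by (cases "x = 0") auto
  define q where "q = F x / x"
  have q: "q < 0" using neg xp by (simp add: q_def divide_neg_pos)
  have "((\<lambda>y. (F y - F 0) / (y - 0)) \<longlongrightarrow> 0) (at 0 within {0..})"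
    using dF by (simp add: has_field_derivative_iff)
  then have "eventually (\<lambda>y. q < (F y - F 0) / (y - 0)) (at 0 within {0..})"
    using q by (rule order_tendstoD(1))
  then obtain d where d: "d > 0" and dH: "\<And>y. y \<in> {0..} \<Longrightarrow> 0 < dist y 0 \<Longrightarrow> dist y 0 < d \<Longrightarrow> q < (F y - F 0) / (y - 0)"
    unfolding eventually_at by auto
  define t where "t = min (1/2) (d / (2 * x))"
  have t0: "0 < t" "t < 1" "t * x < d" using d xp
    by (auto simp: t_def min_def field_simps)
  have "F ((1 - t) * 0 + t * x) < (1 - t) * F 0 + t * F x"
    apply (rule sc[unfolded strictly_convex_on_def, rule_format]) using xp t0 by auto
  then have Ftx: "F (t * x) < t * F x" using F0 by simp
  have "q < (F (t * x) - F 0) / (t * x - 0)"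
    using dH[of "t * x"] t0 xp by auto
  then have "q * (t * x) < F (t * x)" using t0 xp F0 by (simp add: pos_less_divide_eq)
  moreover have "q * (t * x) = t * F x" using xp by (simp add: q_def)
  ultimately show False using Ftx by simp
qed

definition gint :: "'a::euclidean_space itself \<Rightarrow> real \<Rightarrow> real" where
  "gint T d = enn2real (\<integral>\<^sup>+ x. ennreal (exp (- d * (norm (x::'a::euclidean_space))\<^sup>2)) \<partial>lborel)"

lemma Ffun_finite:
  assumes "Ffun F \<rho> = ereal f"
  shows "integrable lborel (\<lambda>x. F (\<rho> x))" "f = (\<integral> x. F (\<rho> x) \<partial>lborel)"
  using assms unfolding Ffun_def by (auto split: if_splits)

lemma moment2_integrable:
  assumes r: "\<rho> \<in> P2ac"
  shows "integrable lborel (\<lambda>x. (norm x)\<^sup>2 * \<rho> x)"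
    "(\<integral> x. (norm x)\<^sup>2 * \<rho> x \<partial>lborel) = enn2real (moment2 \<rho>)"
proof -
  have m: "(\<lambda>x. (norm x)\<^sup>2 * \<rho> x) \<in> borel_measurable borel" using P2acD(1)[OF r] by measurable
  show "integrable lborel (\<lambda>x. (norm x)\<^sup>2 * \<rho> x)"
    using P2acD[OF r] m by (intro integrableI_nonneg) (auto simp: moment2_def)
  show "(\<integral> x. (norm x)\<^sup>2 * \<rho> x \<partial>lborel) = enn2real (moment2 \<rho>)"
    using P2acD[OF r] m by (subst integral_eq_nn_integral) (auto simp: moment2_def)
qed

lemma gauss_integrable:
  assumes d: "d > 0"
  shows "integrable lborel (\<lambda>x::'a::euclidean_space. exp (- d * (norm x)\<^sup>2))"
    "(\<integral> x. exp (- d * (norm (x::'a))\<^sup>2) \<partial>lborel) = gint TYPE('a) d"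
proof -
  show "integrable lborel (\<lambda>x::'a::euclidean_space. exp (- d * (norm x)\<^sup>2))"
    using gauss_finite[OF d] by (intro integrableI_nonneg) auto
  show "(\<integral> x. exp (- d * (norm (x::'a))\<^sup>2) \<partial>lborel) = gint TYPE('a) d"
    unfolding gint_def by (subst integral_eq_nn_integral) auto
qed

lemma F_lower:
  fixes \<rho> :: "'a::euclidean_space \<Rightarrow> real"
  assumes H: "Hclass m F" and r: "\<rho> \<in> P2ac" and Ff: "Ffun F \<rho> = ereal f" and d: "d > 0"
  shows "f \<ge> - d * enn2real (moment2 \<rho>) - gint TYPE('a) d"
proof -
  have iF: "integrable lborel (\<lambda>x. F (\<rho> x))" and fe: "f = (\<integral> x. F (\<rho> x) \<partial>lborel)"
    using Ffun_finite[OF Ff] by auto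
  have g0: "gint TYPE('a) d \<ge> 0" unfolding gint_def by simp
  have M0: "enn2real (moment2 \<rho>) \<ge> 0" by simp
  show ?thesis
  proof (cases "m = 1")
    case True
    then have Fe: "\<And>y. y \<ge> 0 \<Longrightarrow> F y = y * ln y" using H unfolding Hclass_def by auto
    have "(\<integral> x. - d * ((norm x)\<^sup>2 * \<rho> x) - exp (- d * (norm x)\<^sup>2) \<partial>lborel) \<le> (\<integral> x. F (\<rho> x) \<partial>lborel)"
    proof (rule integral_mono)
      show "integrable lborel (\<lambda>x. - d * ((norm x)\<^sup>2 * \<rho> x) - exp (- d * (norm x)\<^sup>2))"
        using moment2_integrable(1)[OF r] gauss_integrable(1)[OF d] by auto
      show "integrable lborel (\<lambda>x. F (\<rho> x))" by (rule iF)
      fix x :: 'a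
      have "\<rho> x * ln (\<rho> x) \<ge> - (d * (norm x)\<^sup>2) * \<rho> x - exp (- (d * (norm x)\<^sup>2))"
        using P2acD(2)[OF r] by (rule xlnx_lower)
      then show "- d * ((norm x)\<^sup>2 * \<rho> x) - exp (- d * (norm x)\<^sup>2) \<le> F (\<rho> x)"
        using Fe[OF P2acD(2)[OF r]] by (simp add: algebra_simps)
    qed
    also have "(\<integral> x. - d * ((norm x)\<^sup>2 * \<rho> x) - exp (- d * (norm x)\<^sup>2) \<partial>lborel)
        = - d * enn2real (moment2 \<rho>) - gint TYPE('a) d"
      using moment2_integrable[OF r] gauss_integrable[OF d, where 'a='a] by simp
    finally show ?thesis using fe by simp
  next
    case False
    have "0 \<le> (\<integral> x. F (\<rho> x) \<partial>lborel)"
      using Hclass_nonneg[OF H False P2acD(2)[OF r]] by (intro integral_nonneg_AE) auto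
    moreover have "- d * enn2real (moment2 \<rho>) - gint TYPE('a) d \<le> 0"
      using d g0 M0 mult_nonneg_nonneg[of d "enn2real (moment2 \<rho>)"] by linarith
    ultimately show ?thesis using fe by simp
  qed
qed



lemma ereal_jko_aux:
  fixes A B :: ennreal and X :: ereal
  assumes h: "h > 0" and X: "X \<noteq> -\<infinity>"
    and le: "enn2ereal A + 2 * ereal h * (X + enn2ereal B) \<le> ereal r"
  shows "\<exists>x. X = ereal x \<and> A \<noteq> \<top> \<and> B \<noteq> \<top> \<and> enn2real A + 2 * h * (x + enn2real B) \<le> r"
proof -
  obtain x where x: "X = ereal x \<or> X = \<infinity>" using X by (cases X) auto
  obtain a where a: "(A = ennreal a \<and> a \<ge> 0) \<or> A = \<top>" by (cases A rule: ennreal_cases) auto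
  obtain b where b: "(B = ennreal b \<and> b \<ge> 0) \<or> B = \<top>" by (cases B rule: ennreal_cases) auto
  have ntop: "X = ereal x \<and> A = ennreal a \<and> a \<ge> 0 \<and> B = ennreal b \<and> b \<ge> 0"
  proof (rule ccontr)
    assume "\<not> ?thesis"
    then have "X = \<infinity> \<or> A = \<top> \<or> B = \<top>" using x a b by auto
    then have inf: "enn2ereal A + 2 * ereal h * (X + enn2ereal B) = \<infinity>"
      using x a b h by (auto simp: enn2ereal_ennreal)
    from le[unfolded inf] show False by simp
  qed
  then have "ereal a + 2 * ereal h * (ereal x + ereal b) \<le> ereal r"
    using le by (simp add: enn2ereal_ennreal)
  then have "a + 2 * h * (x + b) \<le> r" by simp
  then show ?thesis using ntop by auto
qed

lemma am_gm_lip: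
  fixes d L h :: real assumes "h > 0"
  shows "L * d \<le> d\<^sup>2 / (4 * h) + h * L\<^sup>2"
proof -
  have "0 \<le> (d - 2 * h * L)\<^sup>2 / (4 * h)" using assms by simp
  also have "(d - 2 * h * L)\<^sup>2 / (4 * h) = d\<^sup>2 / (4 * h) - L * d + h * L\<^sup>2"
    using assms by (simp add: power2_eq_square field_simps)
  finally show ?thesis by simp
qed

lemma norm_sq_shift:
  fixes x y :: "'a::euclidean_space" and h :: real assumes h: "h > 0"
  shows "(norm y)\<^sup>2 \<le> (1 + h) * (norm x)\<^sup>2 + (1 + 1 / h) * (dist x y)\<^sup>2"
proof -
  let ?a = "norm x" and ?d = "dist x y"
  have "norm y \<le> ?a + ?d"
    using norm_triangle_ineq[of x "y - x"] by (simp add: dist_norm norm_minus_commute)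
  then have "(norm y)\<^sup>2 \<le> (?a + ?d)\<^sup>2" by (intro power_mono) auto
  also have "(?a + ?d)\<^sup>2 = ?a\<^sup>2 + 2 * ?a * ?d + ?d\<^sup>2" by (simp add: power2_eq_square algebra_simps)
  also have "2 * ?a * ?d \<le> h * ?a\<^sup>2 + ?d\<^sup>2 / h"
  proof -
    have "0 \<le> (h * ?a - ?d)\<^sup>2 / h" using h by simp
    also have "(h * ?a - ?d)\<^sup>2 / h = h * ?a\<^sup>2 - 2 * ?a * ?d + ?d\<^sup>2 / h"
      using h by (simp add: power2_eq_square field_simps)
    finally show ?thesis by simp
  qed
  finally show ?thesis by (simp add: algebra_simps)
qed

lemma norm_le_sq: "(t::real) \<le> 1 + t\<^sup>2"
proof (cases "t \<le> 1")
  case True then show ?thesis by (smt (verit) zero_le_power2)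
next
  case False then have "t \<le> t\<^sup>2" by (simp add: power2_eq_square)
  then show ?thesis by simp
qed



lemma Ffun_not_minf: "Ffun F \<rho> \<noteq> -\<infinity>"
  unfolding Ffun_def by auto

lemma one_step:
  fixes p q Vm :: "'a::euclidean_space \<Rightarrow> real"
  assumes p: "p \<in> P2ac" and q: "q \<in> P2ac" and h: "h > 0" and L: "L \<ge> 0"
    and Vnn: "\<And>x. Vm x \<ge> 0" and Vmeas: "Vm \<in> borel_measurable borel"
    and Vlip: "\<And>x y. \<bar>Vm x - Vm y\<bar> \<le> L * dist x y"
    and Fp: "Ffun F p = ereal fp"
    and jko: "JKO h F Vm p q \<le> JKO h F Vm p p"
  shows "\<exists>fq. Ffun F q = ereal fq \<and> W2sq (dmeas p) (dmeas q) \<noteq> \<top>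
     \<and> enn2real (W2sq (dmeas p) (dmeas q)) / 4 + h * fq \<le> h * fp + h\<^sup>2 * L\<^sup>2
     \<and> enn2real (moment2 q) \<le> (1 + h) * enn2real (moment2 p) + (1 + 1 / h) * enn2real (W2sq (dmeas p) (dmeas q))"
proof -
  have pm: "p \<in> borel_measurable borel" and p0: "\<And>x. p x \<ge> 0" using P2acD[OF p] by auto
  have qm: "q \<in> borel_measurable borel" and q0: "\<And>x. q x \<ge> 0" using P2acD[OF q] by auto
  have Ufin: "Vfun Vm p \<noteq> \<top>"
  proof -
    have "Vfun Vm p \<le> (\<integral>\<^sup>+ x. ennreal ((Vm 0 + L) * p x) + ennreal L * ennreal ((norm x)\<^sup>2 * p x) \<partial>lborel)"
      unfolding Vfun_def
    proof (rule nn_integral_mono)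
      fix x :: 'a
      have "Vm x \<le> Vm 0 + L * norm x" using Vlip[of x 0] by (simp add: dist_norm)
      also have "\<dots> \<le> Vm 0 + L * (1 + (norm x)\<^sup>2)" using L norm_le_sq[of "norm x"] by (intro add_left_mono mult_left_mono) auto
      finally have "Vm x * p x \<le> (Vm 0 + L) * p x + L * ((norm x)\<^sup>2 * p x)"
        using p0[of x] mult_right_mono[of "Vm x" "Vm 0 + L * (1 + (norm x)\<^sup>2)" "p x"] by (simp add: algebra_simps)
      then have "ennreal (Vm x * p x) \<le> ennreal ((Vm 0 + L) * p x + L * ((norm x)\<^sup>2 * p x))"
        by (rule ennreal_leI)
      also have "\<dots> = ennreal ((Vm 0 + L) * p x) + ennreal L * ennreal ((norm x)\<^sup>2 * p x)"
        using L p0[of x] Vnn[of 0] by (simp add: ennreal_plus ennreal_mult)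
      finally show "ennreal (Vm x * p x) \<le> ennreal ((Vm 0 + L) * p x) + ennreal L * ennreal ((norm x)\<^sup>2 * p x)" .
    qed
    also have "\<dots> = (\<integral>\<^sup>+ x. ennreal (Vm 0 + L) * ennreal (p x) \<partial>lborel) + ennreal L * moment2 p"
      using pm Vnn[of 0] L p0 unfolding moment2_def
      by (subst nn_integral_add) (auto simp: nn_integral_cmult ennreal_mult)
    also have "\<dots> = ennreal (Vm 0 + L) + ennreal L * moment2 p"
      using pm P2acD(3)[OF p] by (simp add: nn_integral_cmult)
    also have "\<dots> < \<top>" using P2acD(4)[OF p] by (simp add: ennreal_mult_less_top less_top)
    finally show ?thesis by simp
  qed
  define u where "u = enn2real (Vfun Vm p)"
  have Ue: "Vfun Vm p = ennreal u" using Ufin by (simp add: u_def less_top)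
  have u0: "u \<ge> 0" by (simp add: u_def)
  have rhs: "JKO h F Vm p p = ereal (2 * h * (fp + u))"
    unfolding JKO_def W2sq_self Fp Ue using u0 by (simp add: enn2ereal_ennreal zero_ennreal.rep_eq)
  from jko[unfolded rhs] have "enn2ereal (W2sq (dmeas q) (dmeas p)) + 2 * ereal h * (Ffun F q + enn2ereal (Vfun Vm q)) \<le> ereal (2 * h * (fp + u))"
    unfolding JKO_def .
  from ereal_jko_aux[OF h Ffun_not_minf this] obtain fq where
    fq: "Ffun F q = ereal fq" and Wfin: "W2sq (dmeas q) (dmeas p) \<noteq> \<top>" and Vqfin: "Vfun Vm q \<noteq> \<top>"
    and ineq: "enn2real (W2sq (dmeas q) (dmeas p)) + 2 * h * (fq + enn2real (Vfun Vm q)) \<le> 2 * h * (fp + u)"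
    by blast
  define w where "w = enn2real (W2sq (dmeas p) (dmeas q))"
  define vq where "vq = enn2real (Vfun Vm q)"
  have Wsym: "W2sq (dmeas q) (dmeas p) = W2sq (dmeas p) (dmeas q)" by (rule W2sq_sym)
  have We: "W2sq (dmeas p) (dmeas q) = ennreal w" using Wfin Wsym by (simp add: w_def less_top)
  have Ve: "Vfun Vm q = ennreal vq" using Vqfin by (simp add: vq_def less_top)
  have w0: "w \<ge> 0" and vq0: "vq \<ge> 0" by (simp_all add: w_def vq_def)
  have ineq': "w + 2 * h * (fq + vq) \<le> 2 * h * (fp + u)"
    using ineq Wsym unfolding w_def vq_def by simp
  have "Vfun Vm p \<le> ((\<integral>\<^sup>+ x. ennreal (Vm x * q x) \<partial>lborel) + ennreal (h * L\<^sup>2)) + ennreal (1 / (4 * h)) * W2sq (dmeas q) (dmeas p)"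
    unfolding Vfun_def
  proof (rule coupling_bound[OF q p Vmeas Vmeas Vnn Vnn])
    show "0 < 1 / (4 * h)" using h by simp
    show "0 \<le> h * L\<^sup>2" using h by simp
    fix x y :: 'a
    have "Vm y - Vm x \<le> L * dist x y" using Vlip[of y x] by (simp add: dist_commute)
    also have "\<dots> \<le> (dist x y)\<^sup>2 / (4 * h) + h * L\<^sup>2" by (rule am_gm_lip[OF h])
    finally show "Vm y \<le> Vm x + 1 / (4 * h) * (dist x y)\<^sup>2 + h * L\<^sup>2" by simp
  qed
  then have "ennreal u \<le> ennreal (vq + h * L\<^sup>2 + w / (4 * h))"
    using Ue Ve We Wsym vq0 w0 h unfolding Vfun_def
    by (simp add: ennreal_plus[symmetric] ennreal_mult[symmetric] del: ennreal_plus)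
  then have ule: "u \<le> vq + h * L\<^sup>2 + w / (4 * h)"
    using vq0 w0 h by (subst (asm) ennreal_le_iff) auto
  have "2 * h * u \<le> 2 * h * (vq + h * L\<^sup>2 + w / (4 * h))" using ule h by simp
  also have "\<dots> = 2 * h * vq + 2 * h\<^sup>2 * L\<^sup>2 + w / 2" using h by (simp add: field_simps power2_eq_square)
  finally have "w + 2 * h * fq \<le> 2 * h * fp + 2 * h\<^sup>2 * L\<^sup>2 + w / 2"
    using ineq' by (simp add: algebra_simps)
  then have step: "w / 4 + h * fq \<le> h * fp + h\<^sup>2 * L\<^sup>2" by simp
  have "moment2 q \<le> ((\<integral>\<^sup>+ x. ennreal ((1 + h) * (norm x)\<^sup>2 * p x) \<partial>lborel) + ennreal 0) + ennreal (1 + 1 / h) * W2sq (dmeas p) (dmeas q)"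
    unfolding moment2_def
  proof (rule coupling_bound[OF p q])
    show "(\<lambda>x::'a. (1 + h) * (norm x)\<^sup>2) \<in> borel_measurable borel" by measurable
    show "(\<lambda>x::'a. (norm x)\<^sup>2) \<in> borel_measurable borel" by measurable
    show "0 < 1 + 1 / h" using h by (simp add: add_pos_pos)
    fix x y :: 'a
    show "0 \<le> (1 + h) * (norm x)\<^sup>2" using h by simp
    show "0 \<le> (norm x)\<^sup>2" by simp
    show "(norm y)\<^sup>2 \<le> (1 + h) * (norm x)\<^sup>2 + (1 + 1 / h) * (dist x y)\<^sup>2 + 0"
      using norm_sq_shift[OF h] by simp
  qed simp
  also have "(\<integral>\<^sup>+ x. ennreal ((1 + h) * (norm x)\<^sup>2 * p x) \<partial>lborel) = ennreal (1 + h) * moment2 p"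
  proof -
    have "\<And>x. ennreal ((1 + h) * (norm x)\<^sup>2 * p x) = ennreal (1 + h) * ennreal ((norm x)\<^sup>2 * p x)"
      using h p0 by (subst ennreal_mult[symmetric]) (auto simp: mult.assoc simp del: ennreal_plus)
    then have "(\<integral>\<^sup>+ x. ennreal ((1 + h) * (norm x)\<^sup>2 * p x) \<partial>lborel) = (\<integral>\<^sup>+ x. ennreal (1 + h) * ennreal ((norm x)\<^sup>2 * p x) \<partial>lborel)"
      by simp
    also have "\<dots> = ennreal (1 + h) * moment2 p"
      unfolding moment2_def using pm by (subst nn_integral_cmult) auto
    finally show ?thesis .
  qed
  finally have "moment2 q \<le> ennreal (1 + h) * moment2 p + ennreal (1 + 1 / h) * ennreal w"
    using We by simp
  moreover have mpe: "moment2 p = ennreal (enn2real (moment2 p))" using P2acD(4)[OF p] by (simp add: less_top)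
  moreover have mqe: "moment2 q = ennreal (enn2real (moment2 q))" using P2acD(4)[OF q] by (simp add: less_top)
  moreover have "ennreal (1 + h) * ennreal (enn2real (moment2 p)) + ennreal (1 + 1 / h) * ennreal w
      = ennreal ((1 + h) * enn2real (moment2 p) + (1 + 1 / h) * w)"
    using h w0 by (simp add: ennreal_mult[symmetric] ennreal_plus[symmetric] del: ennreal_plus)
  ultimately have "ennreal (enn2real (moment2 q)) \<le> ennreal ((1 + h) * enn2real (moment2 p) + (1 + 1 / h) * w)"
    by metis
  then have mom: "enn2real (moment2 q) \<le> (1 + h) * enn2real (moment2 p) + (1 + 1 / h) * w"
    using h w0 by (subst (asm) ennreal_le_iff) (auto intro!: add_nonneg_nonneg)
  show ?thesis using fq We step mom unfolding w_def by auto
qed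



lemma arith_S:
  fixes h k T L g Mk f0 fk S d :: real
  assumes h: "h > 0" and kT: "k * h \<le> T" and k0: "k \<ge> 0" and g: "g \<ge> 0" and L: "L \<ge> 0"
    and S1: "S / 4 + h * fk \<le> h * f0 + k * h\<^sup>2 * L\<^sup>2"
    and fl: "fk \<ge> - d * Mk - g"
  shows "S \<le> 4 * h * (\<bar>f0\<bar> + g + T * L\<^sup>2 + d * Mk)"
proof -
  have "k * h\<^sup>2 * L\<^sup>2 = h * ((k * h) * L\<^sup>2)" by (simp add: power2_eq_square)
  also have "\<dots> \<le> h * (T * L\<^sup>2)" using h kT L by (intro mult_left_mono mult_right_mono) auto
  finally have a: "k * h\<^sup>2 * L\<^sup>2 \<le> h * (T * L\<^sup>2)" .
  have "h * (- d * Mk - g) \<le> h * fk" using fl h by (intro mult_left_mono) auto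
  then have b: "- h * fk \<le> h * (d * Mk + g)" by (simp add: algebra_simps)
  have c: "h * f0 \<le> h * \<bar>f0\<bar>" using h by simp
  have "S / 4 \<le> h * \<bar>f0\<bar> + h * (d * Mk + g) + h * (T * L\<^sup>2)" using S1 a b c by linarith
  then show ?thesis by (simp add: algebra_simps)
qed

lemma arith_M:
  fixes h T E M0 Mk S K d :: real
  assumes h: "h > 0" and hT: "h \<le> T" and E: "E \<ge> 1" and P: "P \<le> E" and P0: "P \<ge> 0"
    and d: "d = 1 / (8 * E * (T + 1))" and K: "K \<ge> 0" and Mk0: "Mk \<ge> 0" and M0: "M0 \<ge> 0" and S0: "S \<ge> 0"
    and SK: "S \<le> 4 * h * (K + d * Mk)"
    and Mk: "Mk \<le> P * (M0 + (1 + 1 / h) * S)"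
  shows "Mk \<le> 2 * (E * M0 + 4 * E * (T + 1) * K)"
proof -
  have T0: "T > 0" using h hT by simp
  have "(1 + 1 / h) * S \<le> (1 + 1 / h) * (4 * h * (K + d * Mk))"
    using SK h by (intro mult_left_mono) (auto simp: add_nonneg_nonneg)
  also have "\<dots> = 4 * (h + 1) * (K + d * Mk)" using h by (simp add: field_simps)
  also have "\<dots> \<le> 4 * (T + 1) * (K + d * Mk)" using hT K Mk0 d T0 E
    by (intro mult_right_mono) (auto intro!: add_nonneg_nonneg mult_nonneg_nonneg)
  finally have a: "(1 + 1 / h) * S \<le> 4 * (T + 1) * (K + d * Mk)" .
  have "Mk \<le> E * (M0 + (1 + 1 / h) * S)"
    using Mk P M0 S0 h by (smt (verit) mult_right_mono zero_le_divide_1_iff add_nonneg_nonneg mult_nonneg_nonneg)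
  also have "\<dots> \<le> E * (M0 + 4 * (T + 1) * (K + d * Mk))" using a E by simp
  also have "\<dots> = E * M0 + 4 * E * (T + 1) * K + (4 * E * (T + 1) * d) * Mk" by (simp add: algebra_simps)
  also have "4 * E * (T + 1) * d = 1 / 2" using d T0 E by simp
  finally have "Mk \<le> E * M0 + 4 * E * (T + 1) * K + Mk / 2" by simp
  then show ?thesis by simp
qed

lemma pow_le_exp:
  fixes h :: real assumes "h \<ge> 0" shows "(1 + h) ^ k \<le> exp (real k * h)"
proof -
  have "(1 + h) ^ k \<le> exp h ^ k" using assms by (intro power_mono) (auto simp: exp_ge_add_one_self[of h] add.commute)
  also have "\<dots> = exp (real k * h)" by (simp add: exp_of_nat_mult)
  finally show ?thesis .
qed



lemma lip_from_grad:
  fixes f :: "'a::euclidean_space \<Rightarrow> real"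
  assumes D: "\<And>x. (f has_derivative (\<lambda>v. g x \<bullet> v)) (at x)" and B: "\<And>x. norm (g x) \<le> L"
  shows "\<bar>f x - f y\<bar> \<le> L * dist x y" "f \<in> borel_measurable borel"
proof -
  have "norm (f x - f y) \<le> L * norm (x - y)"
  proof (rule differentiable_bound[of UNIV])
    show "convex (UNIV :: 'a set)" by simp
    fix z :: 'a
    show "(f has_derivative (\<lambda>v. g z \<bullet> v)) (at z within UNIV)" using D by simp
    have "onorm (\<lambda>v. g z \<bullet> v) \<le> norm (g z) * onorm (\<lambda>v::'a. v)"
      by (rule onorm_inner_right) simp
    also have "\<dots> = norm (g z)" by (simp add: onorm_id)
    finally show "onorm (\<lambda>v. g z \<bullet> v) \<le> L" using B[of z] by simp
  qed auto
  then show "\<bar>f x - f y\<bar> \<le> L * dist x y" by (simp add: dist_norm)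
  show "f \<in> borel_measurable borel"
    by (rule borel_measurable_continuous_onI, rule has_derivative_continuous_on[of UNIV f "\<lambda>x v. g x \<bullet> v"]) (use D in simp)
qed



theorem mainTheorem4:
  fixes m :: "'l::finite \<Rightarrow> real"
    and F :: "'l \<Rightarrow> real \<Rightarrow> real"
    and V :: "'l \<Rightarrow> ('l \<Rightarrow> 'a::euclidean_space \<Rightarrow> real) \<Rightarrow> 'a \<Rightarrow> real"
    and gradV :: "'l \<Rightarrow> ('l \<Rightarrow> 'a \<Rightarrow> real) \<Rightarrow> 'a \<Rightarrow> 'a"
    and hessV :: "'l \<Rightarrow> ('l \<Rightarrow> 'a \<Rightarrow> real) \<Rightarrow> 'a \<Rightarrow> ('a \<Rightarrow>\<^sub>L 'a)"
    and rho0 :: "'l \<Rightarrow> 'a \<Rightarrow> real"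
    and rho :: "real \<Rightarrow> nat \<Rightarrow> 'l \<Rightarrow> 'a \<Rightarrow> real"
    and T :: real and i :: 'l
  assumes m_ge: "\<And>j. m j \<ge> 1"
    and F_class: "\<And>j. Hclass (m j) (F j)"
    and V_nonneg: "\<And>j \<mu> x. (\<forall>q. \<mu> q \<in> P2ac) \<Longrightarrow> V j \<mu> x \<ge> 0"
    and V_grad: "\<And>j \<mu> x. (\<forall>q. \<mu> q \<in> P2ac) \<Longrightarrow>
                   (V j \<mu> has_derivative (\<lambda>v. gradV j \<mu> x \<bullet> v)) (at x)"
    and V_hess: "\<And>j \<mu> x. (\<forall>q. \<mu> q \<in> P2ac) \<Longrightarrow>
                   (gradV j \<mu> has_derivative blinfun_apply (hessV j \<mu> x)) (at x)"
    and V_C2: "\<And>j \<mu>. (\<forall>q. \<mu> q \<in> P2ac) \<Longrightarrow> continuous_on UNIV (hessV j \<mu>)"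
    and V_cont: "\<And>j (\<mu>s :: nat \<Rightarrow> 'l \<Rightarrow> 'a \<Rightarrow> real) \<sigma> x.
                   (\<forall>s q. \<mu>s s q \<in> P2ac) \<Longrightarrow> (\<forall>q. \<sigma> q \<in> P2ac) \<Longrightarrow>
                   (\<forall>q. (\<lambda>s. W2 (dmeas (\<mu>s s q)) (dmeas (\<sigma> q))) \<longlonglongrightarrow> 0) \<Longrightarrow>
                   (\<lambda>s. V j (\<mu>s s) x) \<longlonglongrightarrow> V j \<sigma> x"
    and V_bounds: "\<exists>C. \<forall>j \<mu> \<nu> \<sigma> x. (\<forall>q. \<mu> q \<in> P2ac) \<longrightarrow> (\<forall>q. \<nu> q \<in> P2ac) \<longrightarrow>
                     (\<forall>q. \<sigma> q \<in> P2ac) \<longrightarrow>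
                     norm (gradV j \<mu> x) + norm (hessV j \<mu> x) \<le> C
                     \<and> norm (gradV j \<nu> x - gradV j \<sigma> x)
                         \<le> C * (\<Sum>q\<in>UNIV. W2 (dmeas (\<nu> q)) (dmeas (\<sigma> q)))"
    and init_P2: "\<And>j. rho0 j \<in> P2ac"
    and init_energy: "\<And>j. Ffun (F j) (rho0 j) + enn2ereal (Vfun (V j rho0) (rho0 j)) < \<infinity>"
    and scheme0: "\<And>h j. h > 0 \<Longrightarrow> rho h 0 j = rho0 j"
    and scheme_P2: "\<And>h k j. h > 0 \<Longrightarrow> k \<ge> 1 \<Longrightarrow> rho h k j \<in> P2ac"
    and scheme_min: "\<And>h k j \<sigma>. h > 0 \<Longrightarrow> k \<ge> 1 \<Longrightarrow> \<sigma> \<in> P2ac \<Longrightarrow>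
                       JKO h (F j) (V j (rho h (k - 1))) (rho h (k - 1) j) (rho h k j)
                         \<le> JKO h (F j) (V j (rho h (k - 1))) (rho h (k - 1) j) \<sigma>"
  shows "\<exists>C::real. \<forall>h>0. \<forall>k::nat. real k * h \<le> T \<longrightarrow>
            moment2 (rho h k i) \<le> ennreal C
          \<and> Ffun (F i) (rho h k i) \<le> ereal C
          \<and> (\<Sum>k'<nat \<lfloor>T / h\<rfloor>. W2sq (dmeas (rho h k' i)) (dmeas (rho h (k' + 1) i)))
               \<le> ennreal (C * h)"
proof -
  obtain C0 where C0: "\<forall>j \<mu> \<nu> \<sigma> x. (\<forall>q. \<mu> q \<in> P2ac) \<longrightarrow> (\<forall>q. \<nu> q \<in> P2ac) \<longrightarrow>
                     (\<forall>q. \<sigma> q \<in> P2ac) \<longrightarrow>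
                     norm (gradV j \<mu> x) + norm (hessV j \<mu> x) \<le> C0
                     \<and> norm (gradV j \<nu> x - gradV j \<sigma> x)
                         \<le> C0 * (\<Sum>q\<in>UNIV. W2 (dmeas (\<nu> q)) (dmeas (\<sigma> q)))"
    using V_bounds by blast
  define L where "L = max C0 0"
  have L0: "L \<ge> 0" by (simp add: L_def)
  have tup: "\<And>h k j. h > 0 \<Longrightarrow> rho h k j \<in> P2ac"
  proof -
    fix h :: real and k j assume h: "h > 0"
    show "rho h k j \<in> P2ac"
    proof (cases "k = 0")
      case True then show ?thesis using scheme0[OF h] init_P2 by simp
    next
      case False then show ?thesis using scheme_P2[OF h] by simp
    qed
  qed
  have grad: "\<And>(\<mu>::'l \<Rightarrow> 'a \<Rightarrow> real) x. (\<forall>q. \<mu> q \<in> P2ac) \<Longrightarrow> norm (gradV i \<mu> x) \<le> L"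
  proof -
    fix \<mu> :: "'l \<Rightarrow> 'a \<Rightarrow> real" and x assume "\<forall>q. \<mu> q \<in> P2ac"
    then have "norm (gradV i \<mu> x) + norm (hessV i \<mu> x) \<le> C0" using C0 by blast
    then show "norm (gradV i \<mu> x) \<le> L" unfolding L_def using norm_ge_zero[of "hessV i \<mu> x"] by linarith
  qed
  have Vlip: "\<And>(\<mu>::'l \<Rightarrow> 'a \<Rightarrow> real) x y. (\<forall>q. \<mu> q \<in> P2ac) \<Longrightarrow> \<bar>V i \<mu> x - V i \<mu> y\<bar> \<le> L * dist x y"
    using lip_from_grad(1)[OF V_grad grad] by blast
  have Vmeas: "\<And>(\<mu>::'l \<Rightarrow> 'a \<Rightarrow> real). (\<forall>q. \<mu> q \<in> P2ac) \<Longrightarrow> V i \<mu> \<in> borel_measurable borel"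
    using lip_from_grad(2)[OF V_grad grad] by blast
  obtain f0 where f0: "Ffun (F i) (rho0 i) = ereal f0"
  proof (cases "integrable lborel (\<lambda>x. F i (rho0 i x))")
    case True then show ?thesis using that unfolding Ffun_def by simp
  next
    case False
    then have "Ffun (F i) (rho0 i) = \<infinity>" unfolding Ffun_def by simp
    then have "Ffun (F i) (rho0 i) + enn2ereal (Vfun (V i rho0) (rho0 i)) = \<infinity>" by simp
    then show ?thesis using init_energy[of i] by simp
  qed
  define w where "w = (\<lambda>h j. enn2real (W2sq (dmeas (rho h j i)) (dmeas (rho h (Suc j) i))))"
  define Mm where "Mm = (\<lambda>h k. enn2real (moment2 (rho h k i)))"
  define M0 where "M0 = enn2real (moment2 (rho0 i))"
  have Mm0: "\<And>h. h > 0 \<Longrightarrow> Mm h 0 = M0" unfolding Mm_def M0_def using scheme0 by simp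
  have M00: "M0 \<ge> 0" by (simp add: M0_def)
  have w0: "\<And>h j. w h j \<ge> 0" by (simp add: w_def)
  have ind: "\<And>h k. h > 0 \<Longrightarrow> (\<exists>fk. Ffun (F i) (rho h k i) = ereal fk
      \<and> (\<Sum>j<k. w h j) / 4 + h * fk \<le> h * f0 + real k * h\<^sup>2 * L\<^sup>2)
      \<and> (\<forall>j<k. W2sq (dmeas (rho h j i)) (dmeas (rho h (Suc j) i)) \<noteq> \<top>)
      \<and> Mm h k \<le> (1 + h) ^ k * (M0 + (1 + 1 / h) * (\<Sum>j<k. w h j))"
  proof -
    fix h :: real and k :: nat assume h: "h > 0"
    show "?thesis h k"
    proof (induction k)
      case 0
      show ?case using f0 scheme0[OF h] Mm0[OF h] by simp
    next
      case (Suc k)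
      from Suc.IH obtain fk where fk: "Ffun (F i) (rho h k i) = ereal fk"
        and S1: "(\<Sum>j<k. w h j) / 4 + h * fk \<le> h * f0 + real k * h\<^sup>2 * L\<^sup>2"
        and Wf: "\<forall>j<k. W2sq (dmeas (rho h j i)) (dmeas (rho h (Suc j) i)) \<noteq> \<top>"
        and MI: "Mm h k \<le> (1 + h) ^ k * (M0 + (1 + 1 / h) * (\<Sum>j<k. w h j))" by blast
      have tk: "\<forall>q. rho h k q \<in> P2ac" using tup[OF h] by blast
      have jko: "JKO h (F i) (V i (rho h k)) (rho h k i) (rho h (Suc k) i)
           \<le> JKO h (F i) (V i (rho h k)) (rho h k i) (rho h k i)"
        using scheme_min[OF h _ tup[OF h], of "Suc k" i k i] by simp
      from one_step[OF tup[OF h] tup[OF h] h L0 V_nonneg[OF tk] Vmeas[OF tk] Vlip[OF tk] fk jko]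
      obtain fq where fq: "Ffun (F i) (rho h (Suc k) i) = ereal fq"
        and Wk: "W2sq (dmeas (rho h k i)) (dmeas (rho h (Suc k) i)) \<noteq> \<top>"
        and st: "w h k / 4 + h * fq \<le> h * fk + h\<^sup>2 * L\<^sup>2"
        and mo: "Mm h (Suc k) \<le> (1 + h) * Mm h k + (1 + 1 / h) * w h k"
        unfolding w_def Mm_def by blast
      have A: "(\<Sum>j<Suc k. w h j) / 4 + h * fq \<le> h * f0 + real (Suc k) * h\<^sup>2 * L\<^sup>2"
      proof -
        have e1: "(\<Sum>j<Suc k. w h j) = (\<Sum>j<k. w h j) + w h k" by simp
        have e2: "real (Suc k) * h\<^sup>2 * L\<^sup>2 = real k * h\<^sup>2 * L\<^sup>2 + h\<^sup>2 * L\<^sup>2" by (simp add: algebra_simps)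
        show ?thesis unfolding e1 e2 using S1 st by (simp add: add_divide_distrib)
      qed
      have B: "\<forall>j<Suc k. W2sq (dmeas (rho h j i)) (dmeas (rho h (Suc j) i)) \<noteq> \<top>"
        using Wf Wk less_Suc_eq by auto
      define a where "a = 1 + 1 / h"
      have a0: "a \<ge> 0" using h by (simp add: a_def add_nonneg_nonneg)
      define X where "X = M0 + a * (\<Sum>j<k. w h j)"
      have P1: "(1 + h) ^ Suc k \<ge> 1" using h by (intro one_le_power) simp
      have "(1 + h) * Mm h k \<le> (1 + h) * ((1 + h) ^ k * X)"
        using MI h unfolding X_def a_def by (intro mult_left_mono) auto
      also have "\<dots> = (1 + h) ^ Suc k * X" by simp
      finally have c1: "(1 + h) * Mm h k \<le> (1 + h) ^ Suc k * X" .
      have c2: "a * w h k \<le> (1 + h) ^ Suc k * (a * w h k)"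
        using mult_right_mono[OF P1, of "a * w h k"] a0 w0[of h k] by simp
      have "Mm h (Suc k) \<le> (1 + h) ^ Suc k * X + (1 + h) ^ Suc k * (a * w h k)"
        using mo c1 c2 unfolding a_def by linarith
      also have "\<dots> = (1 + h) ^ Suc k * (M0 + a * (\<Sum>j<Suc k. w h j))"
        unfolding X_def by (simp add: algebra_simps)
      finally have C: "Mm h (Suc k) \<le> (1 + h) ^ Suc k * (M0 + (1 + 1 / h) * (\<Sum>j<Suc k. w h j))"
        unfolding a_def .
      show ?case using fq A B C by blast
    qed
  qed
  show ?thesis
  proof (cases "T \<ge> 0")
    case False
    show ?thesis
    proof (rule exI[of _ 0], intro allI impI)
      fix h :: real and k :: nat assume "h > 0" "real k * h \<le> T"
      moreover have "real k * h \<ge> 0" using \<open>h > 0\<close> by simp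
      ultimately show "moment2 (rho h k i) \<le> ennreal 0 \<and> Ffun (F i) (rho h k i) \<le> ereal 0 \<and>
          (\<Sum>k'<nat \<lfloor>T / h\<rfloor>. W2sq (dmeas (rho h k' i)) (dmeas (rho h (k' + 1) i))) \<le> ennreal (0 * h)"
        using False by linarith
    qed
  next
    case True
    define E where "E = exp T"
    have E1: "E \<ge> 1" using True by (simp add: E_def)
    define d where "d = 1 / (8 * E * (T + 1))"
    have d0: "d > 0" using E1 True by (simp add: d_def)
    define g where "g = gint TYPE('a) d"
    have g0: "g \<ge> 0" by (simp add: g_def gint_def)
    define K where "K = \<bar>f0\<bar> + g + T * L\<^sup>2"
    have K0: "K \<ge> 0" using g0 True by (simp add: K_def)
    define B where "B = 2 * (E * M0 + 4 * E * (T + 1) * K)"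
    have B0: "B \<ge> 0" using E1 M00 K0 True by (simp add: B_def)
    have M0B: "M0 \<le> B"
    proof -
      have "M0 \<le> E * M0" using E1 M00 by (simp add: mult_le_cancel_right1)
      moreover have "0 \<le> 4 * E * (T + 1) * K" using E1 K0 True by simp
      moreover have "\<And>Y Z. M0 \<le> Z \<Longrightarrow> 0 \<le> Y \<Longrightarrow> M0 \<le> 2 * (Z + Y)" using M00 by (smt (verit))
      ultimately show ?thesis unfolding B_def by blast
    qed
    define C where "C = B + \<bar>f0\<bar> + T * L\<^sup>2 + 4 * (K + d * B)"
    have dB: "d * B \<ge> 0" using d0 B0 by simp
    have central: "\<And>h k. h > 0 \<Longrightarrow> real k * h \<le> T \<Longrightarrow> (\<exists>fk. Ffun (F i) (rho h k i) = ereal fk \<and> fk \<le> \<bar>f0\<bar> + T * L\<^sup>2)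
        \<and> Mm h k \<le> B \<and> (\<Sum>j<k. w h j) \<le> 4 * h * (K + d * B)
        \<and> (\<forall>j<k. W2sq (dmeas (rho h j i)) (dmeas (rho h (Suc j) i)) \<noteq> \<top>)"
    proof -
      fix h :: real and k :: nat assume h: "h > 0" and kT: "real k * h \<le> T"
      from ind[OF h, of k] obtain fk where fk: "Ffun (F i) (rho h k i) = ereal fk"
        and S1: "(\<Sum>j<k. w h j) / 4 + h * fk \<le> h * f0 + real k * h\<^sup>2 * L\<^sup>2"
        and Wf: "\<forall>j<k. W2sq (dmeas (rho h j i)) (dmeas (rho h (Suc j) i)) \<noteq> \<top>"
        and MI: "Mm h k \<le> (1 + h) ^ k * (M0 + (1 + 1 / h) * (\<Sum>j<k. w h j))" by blast
      have S0: "(\<Sum>j<k. w h j) \<ge> 0" using w0 by (simp add: sum_nonneg)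
      have Mk0: "Mm h k \<ge> 0" by (simp add: Mm_def)
      have a: "real k * h\<^sup>2 * L\<^sup>2 \<le> h * (T * L\<^sup>2)"
      proof -
        have "real k * h\<^sup>2 * L\<^sup>2 = h * ((real k * h) * L\<^sup>2)" by (simp add: power2_eq_square)
        also have "\<dots> \<le> h * (T * L\<^sup>2)" using h kT by (intro mult_left_mono mult_right_mono) auto
        finally show ?thesis .
      qed
      have "h * fk \<le> h * (f0 + T * L\<^sup>2)" using S1 S0 a by (simp add: algebra_simps)
      then have "fk \<le> f0 + T * L\<^sup>2" using h by simp
      then have fkb: "fk \<le> \<bar>f0\<bar> + T * L\<^sup>2" by linarith
      have fl: "fk \<ge> - d * Mm h k - g"
        using F_lower[OF F_class tup[OF h] fk d0] unfolding Mm_def g_def .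
      have SK: "(\<Sum>j<k. w h j) \<le> 4 * h * (K + d * Mm h k)"
        using arith_S[OF h kT _ g0 L0 S1 fl] unfolding K_def by (simp add: algebra_simps)
      have MB: "Mm h k \<le> B"
      proof (cases "k = 0")
        case True then show ?thesis using Mm0[OF h] M0B by simp
      next
        case False
        then have "real k \<ge> 1" by simp
        then have hT: "h \<le> T" using kT h by (smt (verit) mult_le_cancel_right1)
        have P: "(1 + h) ^ k \<le> E"
          using pow_le_exp[of h k] h kT unfolding E_def by (smt (verit) exp_le_cancel_iff)
        have P0: "(1 + h) ^ k \<ge> 0" using h by simp
        show ?thesis unfolding B_def
          by (rule arith_M[OF h hT E1 P P0 d_def K0 Mk0 M00 S0 SK MI])
      qed
      have "4 * h * (K + d * Mm h k) \<le> 4 * h * (K + d * B)"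
        using MB d0 h by (simp add: mult_left_mono)
      then show "?thesis h k" using fk fkb MB SK Wf by auto
    qed
    show ?thesis
    proof (rule exI[of _ C], intro allI impI conjI)
      fix h :: real and k :: nat assume h: "h > 0" and kT: "real k * h \<le> T"
      from central[OF h kT] obtain fk where fk: "Ffun (F i) (rho h k i) = ereal fk"
        and fkb: "fk \<le> \<bar>f0\<bar> + T * L\<^sup>2" and MB: "Mm h k \<le> B" by blast
      have T0: "T * L\<^sup>2 \<ge> 0" using True by simp
      have "moment2 (rho h k i) = ennreal (Mm h k)"
        unfolding Mm_def using P2acD(4)[OF tup[OF h]] by (simp add: less_top)
      also have "\<dots> \<le> ennreal C"
      proof (rule ennreal_leI)
        show "Mm h k \<le> C" unfolding C_def using MB dB T0 K0 abs_ge_zero[of f0] by (smt (verit))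
      qed
      finally show "moment2 (rho h k i) \<le> ennreal C" .
      show "Ffun (F i) (rho h k i) \<le> ereal C"
        using fk fkb B0 dB K0 unfolding C_def by simp
      define N where "N = nat \<lfloor>T / h\<rfloor>"
      have NT: "real N * h \<le> T"
      proof -
        have "real N \<le> T / h" unfolding N_def using True h by (simp add: of_nat_nat)
        then show ?thesis using h by (simp add: pos_le_divide_eq)
      qed
      from central[OF h NT] have SN: "(\<Sum>j<N. w h j) \<le> 4 * h * (K + d * B)"
        and WN: "\<forall>j<N. W2sq (dmeas (rho h j i)) (dmeas (rho h (Suc j) i)) \<noteq> \<top>" by blast+
      have "(\<Sum>k'<N. W2sq (dmeas (rho h k' i)) (dmeas (rho h (k' + 1) i))) = (\<Sum>k'<N. ennreal (w h k'))"
        using WN unfolding w_def by (intro sum.cong) (auto simp: less_top)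
      also have "\<dots> = ennreal (\<Sum>k'<N. w h k')" using w0 by (simp add: sum_ennreal)
      also have "\<dots> \<le> ennreal (C * h)"
      proof (rule ennreal_leI)
        have nn: "0 \<le> (B + \<bar>f0\<bar> + T * L\<^sup>2) * h" using h B0 T0 by (intro mult_nonneg_nonneg) auto
        have "C * h = (B + \<bar>f0\<bar> + T * L\<^sup>2) * h + 4 * h * (K + d * B)" unfolding C_def by (simp add: algebra_simps)
        then have "4 * h * (K + d * B) \<le> C * h" using nn by linarith
        then show "(\<Sum>k'<N. w h k') \<le> C * h" using SN by linarith
      qed
      finally show "(\<Sum>k'<nat \<lfloor>T / h\<rfloor>. W2sq (dmeas (rho h k' i)) (dmeas (rho h (k' + 1) i))) \<le> ennreal (C * h)"
        unfolding N_def .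
    qed
  qed
qed

end
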